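(* Let $d \ge 2$ be an integer. For $\nu > 0$ and $\alpha \ge 0$ let $g_1(\nu, \alpha; d) = \left(\nu + 1 + (d-1) \alpha \nu \right) e^{-\frac{\nu^2 + (d-1) \alpha^2}{2}}$, and define $$h_1(\nu;d) = (\nu+1)^2 + 4 \nu^2 (d-1), \qquad h_2(\nu;d) = \frac{(\nu + 1) \sqrt{h_1(\nu;d)} - (\nu+1)^2}{4 \nu^2 (d-1)} - \frac{1}{2},$$ $$g_2(\nu; d) = \frac{\nu + 1 + \sqrt{h_1(\nu;d)}}{2}\, e^{-\frac{\nu^2}{2} + h_2(\nu;d)}.$$ Then $g_1(\nu, \alpha; d) \le g_2(\nu; d)$ for all $\nu > 0$ and $\alpha \ge 0$. *)

theory Defs
  imports Complex_Main
begin

definition g1 :: "real \<Rightarrow> real \<Rightarrow> nat \<Rightarrow> real" where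
  "g1 \<nu> \<alpha> d = (\<nu> + 1 + (real d - 1) * \<alpha> * \<nu>) * exp (- ((\<nu>^2 + (real d - 1) * \<alpha>^2) / 2))"

definition h1 :: "real \<Rightarrow> nat \<Rightarrow> real" where
  "h1 \<nu> d = (\<nu> + 1)^2 + 4 * \<nu>^2 * (real d - 1)"

definition h2 :: "real \<Rightarrow> nat \<Rightarrow> real" where
  "h2 \<nu> d = ((\<nu> + 1) * sqrt (h1 \<nu> d) - (\<nu> + 1)^2) / (4 * \<nu>^2 * (real d - 1)) - 1/2"

definition g2 :: "real \<Rightarrow> nat \<Rightarrow> real" where
  "g2 \<nu> d = (\<nu> + 1 + sqrt (h1 \<nu> d)) / 2 * exp (- (\<nu>^2) / 2 + h2 \<nu> d)"

end

theory Submission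
  imports Defs
begin

theorem lemma3:
  fixes d :: nat and \<nu> \<alpha> :: real
  assumes "d \<ge> 2" and "\<nu> > 0" and "\<alpha> \<ge> 0"
  shows "g1 \<nu> \<alpha> d \<le> g2 \<nu> d"
proof -
  define D where "D = real d - 1"
  have D: "D \<ge> 1" using assms(1) unfolding D_def by simp
  define s where "s = sqrt (h1 \<nu> d)"
  have h1pos: "h1 \<nu> d \<ge> 0" unfolding h1_def using D unfolding D_def by (simp add: add_nonneg_nonneg)
  have "s^2 = h1 \<nu> d" unfolding s_def by (rule real_sqrt_pow2[OF h1pos])
  hence ss: "s^2 = (\<nu>+1)^2 + 4*\<nu>^2*D" unfolding h1_def D_def by simp
  have s0: "s \<ge> 0" unfolding s_def using h1pos by simp
  define a where "a = (s - (\<nu>+1)) / (2*\<nu>*D)"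
  define M where "M = (\<nu>+1+s)/2"
  have Mpos: "M > 0" using s0 assms(2) unfolding M_def by simp
  have aM: "a*M = \<nu>"
  proof -
    have "a*M = (s^2 - (\<nu>+1)^2)/(4*\<nu>*D)" unfolding a_def M_def using assms(2) D
      by (simp add: field_simps power2_eq_square)
    also have "\<dots> = \<nu>" using ss assms(2) D by (simp add: field_simps power2_eq_square)
    finally show ?thesis .
  qed
  have Meq: "M = \<nu>+1 + D*\<nu>*a" unfolding a_def M_def using assms(2) D by (simp add: field_simps)
  have H2: "h2 \<nu> d = - (D*a^2/2)"
  proof -
    have "D*a^2 = (s^2 - 2*s*(\<nu>+1) + (\<nu>+1)^2)/(4*\<nu>^2*D)" unfolding a_def using assms(2) D
      by (simp add: field_simps power2_eq_square)
    also have "\<dots> = 1 + ((\<nu>+1)^2 - s*(\<nu>+1))/(2*\<nu>^2*D)" using ss assms(2) D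
      by (simp add: field_simps power2_eq_square)
    finally show ?thesis unfolding h2_def s_def[symmetric] D_def[symmetric] using assms(2) D
      by (simp add: field_simps power2_eq_square)
  qed
  have g1e: "g1 \<nu> \<alpha> d = (\<nu>+1+D*\<alpha>*\<nu>) * (exp (-(\<nu>^2/2)) * exp (-(D*\<alpha>^2/2)))"
  proof -
    have "exp (-(\<nu>^2/2)) * exp (-(D*\<alpha>^2/2)) = exp (- ((\<nu>^2 + D*\<alpha>^2) / 2))"
      unfolding exp_add[symmetric] by (rule arg_cong[where f=exp]) (simp add: field_simps)
    thus ?thesis unfolding g1_def D_def[symmetric] by simp
  qed
  have g2e: "g2 \<nu> d = M * (exp (-(\<nu>^2/2)) * exp (-(D*a^2/2)))"
  proof -
    have "exp (-(\<nu>^2/2)) * exp (-(D*a^2/2)) = exp (- (\<nu>^2) / 2 + - (D*a^2/2))"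
      unfolding exp_add[symmetric] by (rule arg_cong[where f=exp]) (simp add: field_simps)
    thus ?thesis unfolding g2_def H2 M_def s_def[symmetric] by simp
  qed
  have key: "\<nu>+1+D*\<alpha>*\<nu> \<le> M * exp (D*(\<alpha>^2 - a^2)/2)"
  proof -
    have "M * exp (D*(\<alpha>^2 - a^2)/2) \<ge> M * (1 + D*(\<alpha>^2 - a^2)/2)"
      using Mpos exp_ge_add_one_self by (intro mult_left_mono) auto
    moreover have "M * (1 + D*(\<alpha>^2 - a^2)/2) - (\<nu>+1+D*\<alpha>*\<nu>) = M*D*(\<alpha>-a)^2/2"
    proof -
      have "\<nu>+1+D*\<alpha>*\<nu> = M + D*\<nu>*(\<alpha>-a)" using Meq by (simp add: algebra_simps)
      also have "\<dots> = M + D*(a*M)*(\<alpha>-a)" using aM by simp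
      finally have L: "\<nu>+1+D*\<alpha>*\<nu> = M + D*(a*M)*(\<alpha>-a)" .
      show ?thesis unfolding L by (simp add: field_simps power2_eq_square)
    qed
    moreover have "M*D*(\<alpha>-a)^2/2 \<ge> 0" using Mpos D by simp
    ultimately show ?thesis by linarith
  qed
  have E: "exp (-(D*\<alpha>^2/2)) * exp (D*(\<alpha>^2 - a^2)/2) = exp (-(D*a^2/2))"
    unfolding exp_add[symmetric] by (rule arg_cong[where f=exp]) (simp add: field_simps)
  have "(\<nu>+1+D*\<alpha>*\<nu>) * exp (-(D*\<alpha>^2/2)) \<le> M * exp (D*(\<alpha>^2 - a^2)/2) * exp (-(D*\<alpha>^2/2))"
    using key by (intro mult_right_mono) auto
  also have "\<dots> = M * exp (-(D*a^2/2))" using E by (simp add: mult.assoc mult.commute)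
  finally have "(\<nu>+1+D*\<alpha>*\<nu>) * exp (-(D*\<alpha>^2/2)) * exp (-(\<nu>^2/2)) \<le> M * exp (-(D*a^2/2)) * exp (-(\<nu>^2/2))"
    by (intro mult_right_mono) auto
  thus ?thesis unfolding g1e g2e by (simp add: mult_ac)
qed

end
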